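(* Let $\Omega\subset\mathbb{R}^d$ be a bounded domain with Lipschitz boundary and let $\mathcal{A}\in[L^\infty(\Omega)]^{d\times d}$ be symmetric and uniformly positive definite. Let $V=\widetilde H^1(\Omega)=\{v\in H^1(\Omega):(v,1)=0\}$, $a(u,v)=(\mathcal{A}\nabla u,\nabla v)$, $|||v|||=a(v,v)^{1/2}$, and let $C_P$ be the smallest constant such that $\|v\|_{L^2(\Omega)}\le C_P|||v|||$ for all $v\in V$. Let $u_*\in V$, $\lambda_*\in\mathbb{R}$, and let $w\in V$ satisfy $$a(w,v)=a(u_*,v)-\lambda_*(u_*,v)\quad\forall v\in V.$$ Then $$|||w|||\le\|\nabla u_*-\mathcal{A}^{-1}\mathbf{q}\|_{\mathcal{A}}+C_P\|\lambda_*u_*+\operatorname{div}\mathbf{q}\|_{L^2(\Omega)}\quad\forall\mathbf{q}\in W_0,$$ where $W_0=\{\mathbf{q}\in H(\operatorname{div},\Omega):\mathbf{q}\cdot\mathbf{n}=0\text{ on }\partial\Omega\}$.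
   Context: $(\cdot,\cdot)$ is the $L^2(\Omega)$ scalar product; $H(\operatorname{div},\Omega)$ is the space of $[L^2(\Omega)]^d$ fields with square integrable weak divergence; $\mathbf{n}$ is the unit outward normal; $\|\mathbf{q}\|_{\mathcal{A}}^2=(\mathcal{A}\mathbf{q},\mathbf{q})$. *)

theory Defs
  imports "HOL-Analysis.Analysis"
begin

definition lipschitz_domain :: "'a::euclidean_space set \<Rightarrow> bool" where
  "lipschitz_domain \<Omega> \<longleftrightarrow> open \<Omega> \<and> connected \<Omega> \<and> bounded \<Omega> \<and> \<Omega> \<noteq> {} \<and>
     (\<forall>x\<in>frontier \<Omega>. \<exists>e r L (g :: 'a \<Rightarrow> real). norm e = 1 \<and> r > 0 \<and>
        lipschitz_on L {z. z \<bullet> e = 0} g \<and>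
        \<Omega> \<inter> ball x r = {y \<in> ball x r. y \<bullet> e < g (y - (y \<bullet> e) *\<^sub>R e)})"

text \<open>Infinitely differentiable functions (greatest fixed point: differentiable everywhere
  and all directional derivatives again smooth).\<close>
coinductive smooth :: "('a::euclidean_space \<Rightarrow> real) \<Rightarrow> bool" where
  "(\<forall>x. f differentiable (at x)) \<Longrightarrow> (\<forall>b. smooth (\<lambda>x. frechet_derivative f (at x) b))
     \<Longrightarrow> smooth f"

definition cgrad :: "('a::euclidean_space \<Rightarrow> real) \<Rightarrow> 'a \<Rightarrow> 'a" where
  "cgrad \<phi> x = (\<Sum>i\<in>Basis. frechet_derivative \<phi> (at x) i *\<^sub>R i)"

definition test_fun :: "'a::euclidean_space set \<Rightarrow> ('a \<Rightarrow> real) \<Rightarrow> bool" where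
  "test_fun \<Omega> \<phi> \<longleftrightarrow> smooth \<phi> \<and> compact (closure {x. \<phi> x \<noteq> 0}) \<and>
     closure {x. \<phi> x \<noteq> 0} \<subseteq> \<Omega>"

definition L2 :: "'a::euclidean_space set \<Rightarrow> ('a \<Rightarrow> real) \<Rightarrow> bool" where
  "L2 \<Omega> f \<longleftrightarrow> set_borel_measurable lborel \<Omega> f \<and> set_integrable lborel \<Omega> (\<lambda>x. (f x)\<^sup>2)"

definition L2v :: "'a::euclidean_space set \<Rightarrow> ('a \<Rightarrow> 'a) \<Rightarrow> bool" where
  "L2v \<Omega> q \<longleftrightarrow> set_borel_measurable lborel \<Omega> q \<and> set_integrable lborel \<Omega> (\<lambda>x. (norm (q x))\<^sup>2)"

definition L2inner :: "'a::euclidean_space set \<Rightarrow> ('a \<Rightarrow> real) \<Rightarrow> ('a \<Rightarrow> real) \<Rightarrow> real" where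
  "L2inner \<Omega> f g = (LINT x:\<Omega>|lborel. f x * g x)"

definition L2norm :: "'a::euclidean_space set \<Rightarrow> ('a \<Rightarrow> real) \<Rightarrow> real" where
  "L2norm \<Omega> f = sqrt (LINT x:\<Omega>|lborel. (f x)\<^sup>2)"

definition weak_grad :: "'a::euclidean_space set \<Rightarrow> ('a \<Rightarrow> real) \<Rightarrow> ('a \<Rightarrow> 'a) \<Rightarrow> bool" where
  "weak_grad \<Omega> v g \<longleftrightarrow> (\<forall>\<phi>. test_fun \<Omega> \<phi> \<longrightarrow> (\<forall>i\<in>Basis.
      (LINT x:\<Omega>|lborel. v x * (cgrad \<phi> x \<bullet> i)) = - (LINT x:\<Omega>|lborel. (g x \<bullet> i) * \<phi> x)))"

definition H1 :: "'a::euclidean_space set \<Rightarrow> ('a \<Rightarrow> real) \<Rightarrow> ('a \<Rightarrow> 'a) \<Rightarrow> bool" where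
  "H1 \<Omega> v g \<longleftrightarrow> L2 \<Omega> v \<and> L2v \<Omega> g \<and> weak_grad \<Omega> v g"

definition inV :: "'a::euclidean_space set \<Rightarrow> ('a \<Rightarrow> real) \<Rightarrow> ('a \<Rightarrow> 'a) \<Rightarrow> bool" where
  "inV \<Omega> v g \<longleftrightarrow> H1 \<Omega> v g \<and> L2inner \<Omega> v (\<lambda>_. 1) = 0"

definition Hdiv :: "'a::euclidean_space set \<Rightarrow> ('a \<Rightarrow> 'a) \<Rightarrow> ('a \<Rightarrow> real) \<Rightarrow> bool" where
  "Hdiv \<Omega> q r \<longleftrightarrow> L2v \<Omega> q \<and> L2 \<Omega> r \<and>
     (\<forall>\<phi>. test_fun \<Omega> \<phi> \<longrightarrow>
        (LINT x:\<Omega>|lborel. q x \<bullet> cgrad \<phi> x) = - (LINT x:\<Omega>|lborel. r x * \<phi> x))"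

text \<open>W_0: q in H(div) with vanishing normal trace, the normal trace being defined (as usual)
  by duality through Green's formula: <q.n, v> = (q, grad v) + (div q, v) for v in H^1.\<close>
definition W0 :: "'a::euclidean_space set \<Rightarrow> ('a \<Rightarrow> 'a) \<Rightarrow> ('a \<Rightarrow> real) \<Rightarrow> bool" where
  "W0 \<Omega> q r \<longleftrightarrow> Hdiv \<Omega> q r \<and>
     (\<forall>v g. H1 \<Omega> v g \<longrightarrow> (LINT x:\<Omega>|lborel. q x \<bullet> g x) + (LINT x:\<Omega>|lborel. r x * v x) = 0)"

definition coeff_ok :: "'a::euclidean_space set \<Rightarrow> ('a \<Rightarrow> 'a \<Rightarrow> 'a) \<Rightarrow> bool" where
  "coeff_ok \<Omega> A \<longleftrightarrow> (\<forall>x\<in>\<Omega>. linear (A x)) \<and>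
     (\<forall>i\<in>Basis. \<forall>j\<in>Basis. set_borel_measurable lborel \<Omega> (\<lambda>x. A x i \<bullet> j)) \<and>
     (\<exists>M. \<forall>x\<in>\<Omega>. \<forall>\<xi>. norm (A x \<xi>) \<le> M * norm \<xi>) \<and>
     (\<forall>x\<in>\<Omega>. \<forall>\<xi> \<eta>. A x \<xi> \<bullet> \<eta> = \<xi> \<bullet> A x \<eta>) \<and>
     (\<exists>c>0. \<forall>x\<in>\<Omega>. \<forall>\<xi>. c * (norm \<xi>)\<^sup>2 \<le> A x \<xi> \<bullet> \<xi>)"

definition aform :: "'a::euclidean_space set \<Rightarrow> ('a \<Rightarrow> 'a \<Rightarrow> 'a) \<Rightarrow> ('a \<Rightarrow> 'a) \<Rightarrow> ('a \<Rightarrow> 'a) \<Rightarrow> real" where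
  "aform \<Omega> A g h = (LINT x:\<Omega>|lborel. A x (g x) \<bullet> h x)"

text \<open>||p||_A = (A p, p)^(1/2); for p = grad v this is the energy norm |||v|||.\<close>
definition Anorm :: "'a::euclidean_space set \<Rightarrow> ('a \<Rightarrow> 'a \<Rightarrow> 'a) \<Rightarrow> ('a \<Rightarrow> 'a) \<Rightarrow> real" where
  "Anorm \<Omega> A p = sqrt (aform \<Omega> A p p)"

end

theory Submission
  imports Defs
begin

lemma quad_cs:
  fixes a b c :: real
  assumes H: "\<And>t. 0 \<le> a - 2*t*b + t\<^sup>2*c" and c0: "0 \<le> c"
  shows "b \<le> sqrt a * sqrt c"
proof (cases "b \<le> 0")
  case True
  have "0 \<le> a" using H[of 0] by simp
  then show ?thesis using True c0 by (meson order_trans mult_nonneg_nonneg real_sqrt_ge_zero)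
next
  case False
  have a0: "0 \<le> a" using H[of 0] by simp
  show ?thesis
  proof (cases "c \<le> 0")
    case True
    define t where "t = (a+1)/(2*b)"
    have "2*t*b = a+1" using False by (simp add: t_def)
    moreover have "t\<^sup>2*c \<le> 0" using True by (simp add: mult_nonneg_nonpos)
    ultimately show ?thesis using H[of t] by linarith
  next
    case c: False
    have "0 \<le> a - 2*(b/c)*b + (b/c)\<^sup>2*c" using H[of "b/c"] .
    also have "\<dots> = a - b\<^sup>2/c" using c by (simp add: power2_eq_square field_simps)
    finally have "b\<^sup>2 \<le> a*c" using c by (simp add: field_simps)
    hence "sqrt (b\<^sup>2) \<le> sqrt (a*c)" by (rule real_sqrt_le_mono)
    thus ?thesis using False by (simp add: real_sqrt_mult)
  qed
qed

lemma form_cs: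
  fixes B :: "'a::euclidean_space \<Rightarrow> 'a"
  assumes lin: "linear B" and sym: "\<And>x y. B x \<bullet> y = x \<bullet> B y"
    and psd: "\<And>x. 0 \<le> B x \<bullet> x"
  shows "B e \<bullet> w \<le> sqrt (B e \<bullet> e) * sqrt (B w \<bullet> w)"
proof (rule quad_cs)
  show "0 \<le> B w \<bullet> w" by (rule psd)
next
  fix t :: real
  have "B (e - t *\<^sub>R w) \<bullet> (e - t *\<^sub>R w) = B e \<bullet> e - 2*t*(B e \<bullet> w) + t\<^sup>2 * (B w \<bullet> w)"
    using sym[of e w] by (simp add: linear_diff[OF lin] linear_scale[OF lin] inner_diff_left inner_diff_right power2_eq_square algebra_simps inner_commute)
  thus "0 \<le> B e \<bullet> e - 2*t*(B e \<bullet> w) + t\<^sup>2 * (B w \<bullet> w)" using psd[of "e - t *\<^sub>R w"] by simp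
qed

lemma Bsq:
  fixes B :: "'a::euclidean_space \<Rightarrow> 'a"
  assumes lin: "linear B" and sym: "\<And>x y. B x \<bullet> y = x \<bullet> B y"
    and psd: "\<And>x. 0 \<le> B x \<bullet> x" and bnd: "\<And>x. norm (B x) \<le> M * norm x"
  shows "(norm (B e))\<^sup>2 \<le> M * (B e \<bullet> e)"
proof (cases "norm (B e) = 0")
  case True then show ?thesis
    using bnd[of e] psd[of e] by (auto intro!: mult_nonneg_nonneg) 
next
  case False
  have M0: "0 \<le> M"
  proof (rule ccontr)
    assume "\<not> 0 \<le> M"
    hence "M * norm e \<le> 0" by (simp add: mult_nonpos_nonneg)
    thus False using bnd[of e] False norm_ge_zero[of "B e"] by linarith
  qed
  have b1: "B (B e) \<bullet> B e \<le> M * (norm (B e))\<^sup>2"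
  proof -
    have "B (B e) \<bullet> B e \<le> norm (B (B e)) * norm (B e)" by (rule norm_cauchy_schwarz)
    also have "\<dots> \<le> M * norm (B e) * norm (B e)" by (rule mult_right_mono[OF bnd]) simp
    finally show ?thesis by (simp add: power2_eq_square)
  qed
  have "sqrt (B (B e) \<bullet> B e) \<le> sqrt (M * (norm (B e))\<^sup>2)" using b1 by (rule real_sqrt_le_mono)
  also have "\<dots> = sqrt M * norm (B e)" by (simp add: real_sqrt_mult)
  finally have b2: "sqrt (B (B e) \<bullet> B e) \<le> sqrt M * norm (B e)" .
  have "(norm (B e))\<^sup>2 = B e \<bullet> B e" by (simp add: power2_norm_eq_inner)
  also have "\<dots> \<le> sqrt (B e \<bullet> e) * sqrt (B (B e) \<bullet> B e)" by (rule form_cs[OF lin sym psd])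
  also have "\<dots> \<le> sqrt (B e \<bullet> e) * (sqrt M * norm (B e))"
    using b2 by (rule mult_left_mono) (simp add: psd)
  finally have "norm (B e) * norm (B e) \<le> (sqrt (B e \<bullet> e) * sqrt M) * norm (B e)" by (simp add: power2_eq_square mult_ac)
  hence "norm (B e) \<le> sqrt (B e \<bullet> e) * sqrt M" using False by simp
  hence "(norm (B e))\<^sup>2 \<le> (sqrt (B e \<bullet> e) * sqrt M)\<^sup>2" by (rule power_mono) simp
  thus ?thesis using psd[of e] M0 by (simp add: power_mult_distrib mult_ac)
qed


lemma coer_inv:
  fixes B :: "'a::euclidean_space \<Rightarrow> 'a"
  assumes lin: "linear B" and c: "0 < c" and coer: "\<And>x. c*(norm x)\<^sup>2 \<le> B x \<bullet> x"
  shows "B (inv B y) = y" "norm (inv B y) \<le> norm y / c"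
proof -
  have "inj B" unfolding linear_injective_0[OF lin]
  proof (intro allI impI)
    fix x assume "B x = 0"
    hence "c*(norm x)\<^sup>2 \<le> 0" using coer[of x] by simp
    thus "x = 0" using c by (simp add: mult_le_0_iff)
  qed
  hence "surj B" using linear_injective_imp_surjective lin by blast
  thus B: "B (inv B y) = y" by (rule surj_f_inv_f)
  let ?z = "inv B y"
  have "c * (norm ?z)\<^sup>2 \<le> y \<bullet> ?z" using coer[of ?z] B by simp
  also have "\<dots> \<le> norm y * norm ?z" by (rule norm_cauchy_schwarz)
  finally have "c * norm ?z * norm ?z \<le> norm y * norm ?z" by (simp add: power2_eq_square mult_ac)
  hence "c * norm ?z \<le> norm y"
    by (cases "norm ?z = 0") (use c in auto)
  thus "norm ?z \<le> norm y / c" using c by (simp add: field_simps)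
qed

lemma contraction:
  fixes B :: "'a::euclidean_space \<Rightarrow> 'a"
  assumes lin: "linear B" and sym: "\<And>x y. B x \<bullet> y = x \<bullet> B y"
    and c: "0 < c" and coer: "\<And>x. c*(norm x)\<^sup>2 \<le> B x \<bullet> x"
    and bnd: "\<And>x. norm (B x) \<le> M * norm x" and M: "0 < M"
  shows "(norm (e - (1/M) *\<^sub>R B e))\<^sup>2 \<le> (1 - c/M) * (norm e)\<^sup>2"
proof -
  have psd: "\<And>x. 0 \<le> B x \<bullet> x" using coer c by (meson mult_nonneg_nonneg order_trans less_imp_le zero_le_power2)
  have sq: "(norm (B e))\<^sup>2 \<le> M * (B e \<bullet> e)" by (rule Bsq[OF lin sym psd bnd])
  have ex: "(e - t *\<^sub>R b) \<bullet> (e - t *\<^sub>R b) = e \<bullet> e - 2*t*(b \<bullet> e) + t\<^sup>2*(b \<bullet> b)" for t and b :: 'a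
    by (simp add: inner_diff_left inner_diff_right inner_commute power2_eq_square algebra_simps)
  have "(norm (e - (1/M) *\<^sub>R B e))\<^sup>2 = (norm e)\<^sup>2 - 2*(1/M)*(B e \<bullet> e) + (1/M)\<^sup>2 * (norm (B e))\<^sup>2"
    unfolding power2_norm_eq_inner ex ..
  also have "\<dots> \<le> (norm e)\<^sup>2 - 2*(1/M)*(B e \<bullet> e) + (1/M)\<^sup>2 * (M * (B e \<bullet> e))"
    using sq by (intro add_left_mono mult_left_mono) auto
  also have "\<dots> = (norm e)\<^sup>2 - (B e \<bullet> e)/M" using M by (simp add: power2_eq_square field_simps)
  also have "\<dots> \<le> (norm e)\<^sup>2 - c*(norm e)\<^sup>2/M" using coer[of e] M by (simp add: divide_right_mono)
  also have "\<dots> = (1 - c/M) * (norm e)\<^sup>2" by (simp add: algebra_simps)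
  finally show ?thesis .
qed

lemma richardson:
  fixes B :: "'a::euclidean_space \<Rightarrow> 'a" and Z :: "nat \<Rightarrow> 'a"
  assumes lin: "linear B" and sym: "\<And>x y. B x \<bullet> y = x \<bullet> B y"
    and c: "0 < c" and coer: "\<And>x. c*(norm x)\<^sup>2 \<le> B x \<bullet> x"
    and bnd: "\<And>x. norm (B x) \<le> M * norm x" and M: "0 < M"
    and Z0: "Z 0 = 0" and ZS: "\<And>n. Z (Suc n) = Z n + (1/M) *\<^sub>R (y - B (Z n))"
  shows "Z \<longlonglongrightarrow> inv B y"
proof -
  let ?s = "inv B y"
  have Bs: "B ?s = y" by (rule coer_inv(1)[OF lin c coer])
  define \<rho> where "\<rho> = 1 - c/M"
  obtain i :: 'a where i: "i \<in> Basis" using nonempty_Basis by blast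
  have "c * (norm i)\<^sup>2 \<le> B i \<bullet> i" by (rule coer)
  also have "\<dots> \<le> norm (B i) * norm i" by (rule norm_cauchy_schwarz)
  also have "\<dots> \<le> M * norm i * norm i" by (rule mult_right_mono[OF bnd]) simp
  finally have "c \<le> M" using i by (simp add: power2_eq_square)
  hence r0: "0 \<le> \<rho>" and r1: "\<rho> < 1" using M c by (auto simp: \<rho>_def field_simps)
  have step: "Z (Suc n) - ?s = (Z n - ?s) - (1/M) *\<^sub>R B (Z n - ?s)" for n
    by (simp add: ZS linear_diff[OF lin] Bs algebra_simps)
  have bound: "(norm (Z n - ?s))\<^sup>2 \<le> \<rho>^n * (norm ?s)\<^sup>2" for n
  proof (induction n)
    case 0 then show ?case by (simp add: Z0)
  next
    case (Suc n)
    have "(norm (Z (Suc n) - ?s))\<^sup>2 \<le> \<rho> * (norm (Z n - ?s))\<^sup>2"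
      unfolding step \<rho>_def by (rule contraction[OF lin sym c coer bnd M])
    also have "\<dots> \<le> \<rho> * (\<rho>^n * (norm ?s)\<^sup>2)" using Suc r0 by (rule mult_left_mono)
    finally show ?case by (simp add: mult_ac)
  qed
  have lim: "(\<lambda>n. \<rho>^n * (norm ?s)\<^sup>2) \<longlonglongrightarrow> 0"
    using r0 r1 by (intro tendsto_mult_left_zero LIMSEQ_power_zero) simp
  have "(\<lambda>n. (norm (Z n - ?s))\<^sup>2) \<longlonglongrightarrow> 0"
    by (rule tendsto_sandwich[OF _ _ tendsto_const lim]) (auto simp: bound)
  hence "(\<lambda>n. sqrt ((norm (Z n - ?s))\<^sup>2)) \<longlonglongrightarrow> sqrt 0" by (rule tendsto_real_sqrt)
  hence "(\<lambda>n. norm (Z n - ?s)) \<longlonglongrightarrow> 0" by simp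
  thus ?thesis by (simp add: tendsto_norm_zero_iff LIM_zero_iff)
qed


lemma sbm_inner:
  fixes f g :: "_ \<Rightarrow> 'b::euclidean_space"
  assumes "set_borel_measurable M S f" "set_borel_measurable M S g"
  shows "set_borel_measurable M S (\<lambda>x. f x \<bullet> g x)"
proof -
  have e: "(\<lambda>x. indicator S x *\<^sub>R (f x \<bullet> g x)) = (\<lambda>x. (indicator S x *\<^sub>R f x) \<bullet> (indicator S x *\<^sub>R g x))"
    by (auto simp: indicator_def fun_eq_iff)
  have "(\<lambda>x. (indicator S x *\<^sub>R f x) \<bullet> (indicator S x *\<^sub>R g x)) \<in> borel_measurable M"
    using assms unfolding set_borel_measurable_def by (rule borel_measurable_inner)
  thus ?thesis unfolding set_borel_measurable_def e .
qed

lemma sbm_mult: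
  fixes f g :: "_ \<Rightarrow> real"
  assumes "set_borel_measurable M S f" "set_borel_measurable M S g"
  shows "set_borel_measurable M S (\<lambda>x. f x * g x)"
  using sbm_inner[OF assms] by simp

lemma sbm_add:
  fixes f g :: "_ \<Rightarrow> 'b::euclidean_space"
  assumes "set_borel_measurable M S f" "set_borel_measurable M S g"
  shows "set_borel_measurable M S (\<lambda>x. f x + g x)"
  using assms unfolding set_borel_measurable_def by (simp add: scaleR_add_right)

lemma sbm_diff:
  fixes f g :: "_ \<Rightarrow> 'b::euclidean_space"
  assumes "set_borel_measurable M S f" "set_borel_measurable M S g"
  shows "set_borel_measurable M S (\<lambda>x. f x - g x)"
  using assms unfolding set_borel_measurable_def by (simp add: scaleR_diff_right)

lemma sbm_scale:
  fixes f :: "_ \<Rightarrow> 'b::euclidean_space"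
  assumes "set_borel_measurable M S f"
  shows "set_borel_measurable M S (\<lambda>x. k *\<^sub>R f x)"
proof -
  have e: "(\<lambda>x. indicator S x *\<^sub>R (k *\<^sub>R f x)) = (\<lambda>x. k *\<^sub>R (indicator S x *\<^sub>R f x))"
    by (auto simp: fun_eq_iff)
  have "(\<lambda>x. k *\<^sub>R (indicator S x *\<^sub>R f x)) \<in> borel_measurable M"
    using assms unfolding set_borel_measurable_def by (rule borel_measurable_scaleR[OF borel_measurable_const])
  thus ?thesis unfolding set_borel_measurable_def e .
qed

lemma sbm_norm2:
  fixes f :: "_ \<Rightarrow> 'b::euclidean_space"
  assumes "set_borel_measurable M S f"
  shows "set_borel_measurable M S (\<lambda>x. (norm (f x))\<^sup>2)"
proof -
  have e: "(\<lambda>x. indicator S x *\<^sub>R (norm (f x))\<^sup>2) = (\<lambda>x. (norm (indicator S x *\<^sub>R f x))\<^sup>2)"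
    by (auto simp: indicator_def fun_eq_iff)
  have "(\<lambda>x. (norm (indicator S x *\<^sub>R f x))\<^sup>2) \<in> borel_measurable M"
    using assms unfolding set_borel_measurable_def by (intro borel_measurable_power measurable_compose[OF _ borel_measurable_norm])
  thus ?thesis unfolding set_borel_measurable_def e .
qed

lemma si_bound:
  fixes g :: "_ \<Rightarrow> 'b::euclidean_space" and k :: "_ \<Rightarrow> real"
  assumes "set_borel_measurable M S g" "set_integrable M S k" "\<And>x. x \<in> S \<Longrightarrow> norm (g x) \<le> k x"
  shows "set_integrable M S g"
proof -
  have i: "integrable M (\<lambda>x. indicator S x *\<^sub>R k x)" using assms(2) unfolding set_integrable_def .
  have m: "(\<lambda>x. indicator S x *\<^sub>R g x) \<in> borel_measurable M" using assms(1) unfolding set_borel_measurable_def .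
  have "AE x in M. norm (indicator S x *\<^sub>R g x) \<le> norm (indicator S x *\<^sub>R k x)"
    using assms(3) by (auto simp: indicator_def intro!: AE_I2 order_trans[OF _ abs_ge_self])
  from Bochner_Integration.integrable_bound[OF i m this] show ?thesis unfolding set_integrable_def .
qed

definition sq :: "'x::euclidean_space set \<Rightarrow> ('x \<Rightarrow> 'b::euclidean_space) \<Rightarrow> bool" where
  "sq S f \<longleftrightarrow> set_borel_measurable lborel S f \<and> set_integrable lborel S (\<lambda>x. (norm (f x))\<^sup>2)"

lemma ab_le: "a * b \<le> a\<^sup>2 + b\<^sup>2" if "0 \<le> a" "0 \<le> b" for a b :: real
proof -
  have "0 \<le> (a-b)^2" by simp
  moreover have "(a-b)^2 = a^2 + b^2 - 2*(a*b)" by (simp add: power2_diff)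
  moreover have "0 \<le> a*b" using that by simp
  ultimately show ?thesis by linarith
qed

lemma ab_le2: "(a + b)\<^sup>2 \<le> 2*a\<^sup>2 + 2*b\<^sup>2" for a b :: real
proof -
  have "0 \<le> (a-b)^2" by simp
  moreover have "(a-b)^2 = a^2 + b^2 - 2*(a*b)" by (simp add: power2_diff)
  moreover have "(a+b)^2 = a^2 + b^2 + 2*(a*b)" by (simp add: power2_sum)
  ultimately show ?thesis by linarith
qed

lemma sq_inner:
  fixes f g :: "_ \<Rightarrow> 'b::euclidean_space"
  assumes "sq S f" "sq S g"
  shows "set_integrable lborel S (\<lambda>x. f x \<bullet> g x)"
proof (rule si_bound)
  show "set_borel_measurable lborel S (\<lambda>x. f x \<bullet> g x)" using assms by (auto simp: sq_def intro: sbm_inner)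
  show "set_integrable lborel S (\<lambda>x. (norm (f x))\<^sup>2 + (norm (g x))\<^sup>2)" using assms by (auto simp: sq_def)
  fix x
  have "norm (f x \<bullet> g x) \<le> norm (f x) * norm (g x)" by (simp add: Cauchy_Schwarz_ineq2)
  also have "\<dots> \<le> (norm (f x))\<^sup>2 + (norm (g x))\<^sup>2" by (rule ab_le) auto
  finally show "norm (f x \<bullet> g x) \<le> (norm (f x))\<^sup>2 + (norm (g x))\<^sup>2" .
qed

lemma sq_mult:
  fixes f g :: "_ \<Rightarrow> real"
  assumes "sq S f" "sq S g"
  shows "set_integrable lborel S (\<lambda>x. f x * g x)"
  using sq_inner[OF assms] by simp

lemma sq_dom:
  fixes f :: "_ \<Rightarrow> 'b::euclidean_space" and h :: "_ \<Rightarrow> 'c::euclidean_space"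
  assumes f: "sq S f" and hm: "set_borel_measurable lborel S h" and b: "\<And>x. x \<in> S \<Longrightarrow> norm (h x) \<le> K * norm (f x)"
  shows "sq S h"
proof -
  have "set_integrable lborel S (\<lambda>x. (norm (h x))\<^sup>2)"
  proof (rule si_bound)
    show "set_borel_measurable lborel S (\<lambda>x. (norm (h x))\<^sup>2)" by (rule sbm_norm2) fact
    show "set_integrable lborel S (\<lambda>x. K\<^sup>2 * (norm (f x))\<^sup>2)" using f by (auto simp: sq_def)
    fix x assume x: "x \<in> S"
    have "(norm (h x))\<^sup>2 \<le> (K * norm (f x))\<^sup>2" by (rule power_mono[OF b[OF x]]) simp
    thus "norm ((norm (h x))\<^sup>2) \<le> K\<^sup>2 * (norm (f x))\<^sup>2" by (simp add: power_mult_distrib)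
  qed
  thus ?thesis using hm by (simp add: sq_def)
qed

lemma sq_add:
  fixes f g :: "_ \<Rightarrow> 'b::euclidean_space"
  assumes f: "sq S f" and g: "sq S g"
  shows "sq S (\<lambda>x. f x + g x)"
proof -
  have m: "set_borel_measurable lborel S (\<lambda>x. f x + g x)" using f g by (auto simp: sq_def intro: sbm_add)
  have "set_integrable lborel S (\<lambda>x. (norm (f x + g x))\<^sup>2)"
  proof (rule si_bound)
    show "set_borel_measurable lborel S (\<lambda>x. (norm (f x + g x))\<^sup>2)" using m by (rule sbm_norm2)
    show "set_integrable lborel S (\<lambda>x. 2 * (norm (f x))\<^sup>2 + 2 * (norm (g x))\<^sup>2)" using f g by (auto simp: sq_def)
    fix x
    have "norm (f x + g x) \<le> norm (f x) + norm (g x)" by (rule norm_triangle_ineq)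
    hence "(norm (f x + g x))\<^sup>2 \<le> (norm (f x) + norm (g x))\<^sup>2" by (rule power_mono) simp
    also have "\<dots> \<le> 2 * (norm (f x))\<^sup>2 + 2 * (norm (g x))\<^sup>2"
      by (rule ab_le2)
    finally show "norm ((norm (f x + g x))\<^sup>2) \<le> 2 * (norm (f x))\<^sup>2 + 2 * (norm (g x))\<^sup>2" by simp
  qed
  thus ?thesis using m by (simp add: sq_def)
qed

lemma sq_scale:
  fixes f :: "_ \<Rightarrow> 'b::euclidean_space"
  assumes f: "sq S f"
  shows "sq S (\<lambda>x. k *\<^sub>R f x)"
proof (rule sq_dom[OF f])
  show "set_borel_measurable lborel S (\<lambda>x. k *\<^sub>R f x)" using f by (simp add: sq_def sbm_scale)
  show "norm (k *\<^sub>R f x) \<le> \<bar>k\<bar> * norm (f x)" for x by simp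
qed

lemma sq_diff:
  fixes f g :: "_ \<Rightarrow> 'b::euclidean_space"
  assumes "sq S f" "sq S g"
  shows "sq S (\<lambda>x. f x - g x)"
  using sq_add[OF assms(1) sq_scale[OF assms(2), of "-1"]] by simp


lemma sint_cong:
  fixes f g :: "_ \<Rightarrow> 'b::{banach, second_countable_topology}"
  assumes "\<And>x. x \<in> S \<Longrightarrow> f x = g x"
  shows "(LINT x:S|M. f x) = (LINT x:S|M. g x)"
  unfolding set_lebesgue_integral_def
  by (rule Bochner_Integration.integral_cong) (auto simp: indicator_def assms)

lemma sint_nonneg:
  fixes f :: "_ \<Rightarrow> real"
  assumes "\<And>x. x \<in> S \<Longrightarrow> 0 \<le> f x"
  shows "0 \<le> (LINT x:S|M. f x)"
  unfolding set_lebesgue_integral_def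
  by (rule Bochner_Integration.integral_nonneg) (auto simp: indicator_def assms)

lemma sbm_restrict:
  fixes y :: "_ \<Rightarrow> 'b::real_normed_vector"
  assumes "set_borel_measurable M S y"
  shows "set_borel_measurable M S (\<lambda>x. indicator S x *\<^sub>R y x)"
proof -
  have "(\<lambda>x. indicator S x *\<^sub>R (indicator S x *\<^sub>R y x)) = (\<lambda>x. indicator S x *\<^sub>R y x)"
    by (auto simp: indicator_def fun_eq_iff)
  thus ?thesis using assms unfolding set_borel_measurable_def by simp
qed

lemma A_meas:
  fixes A :: "'a::euclidean_space \<Rightarrow> 'a \<Rightarrow> 'a"
  assumes coeff: "coeff_ok \<Omega> A" and g: "set_borel_measurable lborel \<Omega> g"
  shows "set_borel_measurable lborel \<Omega> (\<lambda>x. A x (g x))"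
proof -
  have lin: "\<And>x. x\<in>\<Omega> \<Longrightarrow> linear (A x)"
    and Am: "\<And>i j. i\<in>Basis \<Longrightarrow> j\<in>Basis \<Longrightarrow> (\<lambda>x. indicator \<Omega> x *\<^sub>R (A x i \<bullet> j)) \<in> borel_measurable lborel"
    using coeff by (auto simp: coeff_ok_def set_borel_measurable_def)
  have gm: "(\<lambda>x. indicator \<Omega> x *\<^sub>R g x) \<in> borel_measurable lborel" using g by (simp add: set_borel_measurable_def)
  have rep: "A x (g x) = (\<Sum>j\<in>Basis. (\<Sum>i\<in>Basis. (g x \<bullet> i) * (A x i \<bullet> j)) *\<^sub>R j)" if x: "x\<in>\<Omega>" for x
  proof -
    have "A x (g x) = A x (\<Sum>i\<in>Basis. (g x \<bullet> i) *\<^sub>R i)" by (simp add: euclidean_representation)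
    also have "\<dots> = (\<Sum>i\<in>Basis. (g x \<bullet> i) *\<^sub>R A x i)"
      using lin[OF x] by (simp add: linear_sum linear_scale o_def)
    also have "\<dots> = (\<Sum>i\<in>Basis. (g x \<bullet> i) *\<^sub>R (\<Sum>j\<in>Basis. (A x i \<bullet> j) *\<^sub>R j))"
      by (simp add: euclidean_representation)
    also have "\<dots> = (\<Sum>i\<in>Basis. \<Sum>j\<in>Basis. ((g x \<bullet> i) * (A x i \<bullet> j)) *\<^sub>R j)"
      by (simp add: scaleR_sum_right)
    also have "\<dots> = (\<Sum>j\<in>Basis. \<Sum>i\<in>Basis. ((g x \<bullet> i) * (A x i \<bullet> j)) *\<^sub>R j)"
      by (rule sum.swap)
    also have "\<dots> = (\<Sum>j\<in>Basis. (\<Sum>i\<in>Basis. (g x \<bullet> i) * (A x i \<bullet> j)) *\<^sub>R j)"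
      by (simp add: scaleR_sum_left)
    finally show ?thesis .
  qed
  have e: "(\<lambda>x. indicator \<Omega> x *\<^sub>R A x (g x)) =
     (\<lambda>x. \<Sum>j\<in>Basis. (\<Sum>i\<in>Basis. ((indicator \<Omega> x *\<^sub>R g x) \<bullet> i) * (indicator \<Omega> x *\<^sub>R (A x i \<bullet> j))) *\<^sub>R j)"
  proof
    fix x show "indicator \<Omega> x *\<^sub>R A x (g x) = (\<Sum>j\<in>Basis. (\<Sum>i\<in>Basis. ((indicator \<Omega> x *\<^sub>R g x) \<bullet> i) * (indicator \<Omega> x *\<^sub>R (A x i \<bullet> j))) *\<^sub>R j)"
      by (cases "x \<in> \<Omega>") (simp_all add: rep)
  qed
  have "(\<lambda>x. \<Sum>j\<in>Basis. (\<Sum>i\<in>Basis. ((indicator \<Omega> x *\<^sub>R g x) \<bullet> i) * (indicator \<Omega> x *\<^sub>R (A x i \<bullet> j))) *\<^sub>R j) \<in> borel_measurable lborel"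
    by (intro borel_measurable_sum borel_measurable_scaleR borel_measurable_times borel_measurable_inner
        borel_measurable_const gm Am) auto
  thus ?thesis unfolding set_borel_measurable_def e .
qed

lemma coeff_props:
  assumes "coeff_ok \<Omega> A"
  obtains M c where "0 < M" "0 < c" "\<And>x. x\<in>\<Omega> \<Longrightarrow> linear (A x)"
    "\<And>x \<xi> \<eta>. x\<in>\<Omega> \<Longrightarrow> A x \<xi> \<bullet> \<eta> = \<xi> \<bullet> A x \<eta>"
    "\<And>x \<xi>. x\<in>\<Omega> \<Longrightarrow> norm (A x \<xi>) \<le> M * norm \<xi>"
    "\<And>x \<xi>. x\<in>\<Omega> \<Longrightarrow> c * (norm \<xi>)\<^sup>2 \<le> A x \<xi> \<bullet> \<xi>"
proof -
  from assms obtain M c where M: "\<forall>x\<in>\<Omega>. \<forall>\<xi>. norm (A x \<xi>) \<le> M * norm \<xi>" and c: "c > 0"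
    "\<forall>x\<in>\<Omega>. \<forall>\<xi>. c * (norm \<xi>)\<^sup>2 \<le> A x \<xi> \<bullet> \<xi>" unfolding coeff_ok_def by blast
  have "norm (A x \<xi>) \<le> max M 1 * norm \<xi>" if "x \<in> \<Omega>" for x \<xi>
    using M that by (meson max.cobounded1 mult_right_mono norm_ge_zero order_trans)
  thus ?thesis using that[of "max M 1" c] c assms unfolding coeff_ok_def by auto
qed

lemma inv_meas:
  fixes A :: "'a::euclidean_space \<Rightarrow> 'a \<Rightarrow> 'a"
  assumes coeff: "coeff_ok \<Omega> A" and y: "set_borel_measurable lborel \<Omega> y"
  shows "set_borel_measurable lborel \<Omega> (\<lambda>x. inv (A x) (y x))"
proof -
  obtain M c where M: "0 < M" and c: "0 < c" and lin: "\<And>x. x\<in>\<Omega> \<Longrightarrow> linear (A x)"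
    and sym: "\<And>x \<xi> \<eta>. x\<in>\<Omega> \<Longrightarrow> A x \<xi> \<bullet> \<eta> = \<xi> \<bullet> A x \<eta>"
    and bnd: "\<And>x \<xi>. x\<in>\<Omega> \<Longrightarrow> norm (A x \<xi>) \<le> M * norm \<xi>"
    and coer: "\<And>x \<xi>. x\<in>\<Omega> \<Longrightarrow> c * (norm \<xi>)\<^sup>2 \<le> A x \<xi> \<bullet> \<xi>"
    using coeff_props[OF coeff] by blast
  define Y where "Y x = indicator \<Omega> x *\<^sub>R y x" for x
  define Z :: "nat \<Rightarrow> 'a \<Rightarrow> 'a" where "Z = rec_nat (\<lambda>x. 0) (\<lambda>n Zn x. Zn x + (1/M) *\<^sub>R (Y x - A x (Zn x)))"
  have Z0: "Z 0 = (\<lambda>x. 0)" by (simp add: Z_def)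
  have ZS: "Z (Suc n) = (\<lambda>x. Z n x + (1/M) *\<^sub>R (Y x - A x (Z n x)))" for n by (simp add: Z_def)
  have Ym: "set_borel_measurable lborel \<Omega> Y" unfolding Y_def by (rule sbm_restrict[OF y])
  have Zm: "set_borel_measurable lborel \<Omega> (Z n)" for n
  proof (induction n)
    case 0 then show ?case by (simp add: Z0 set_borel_measurable_def)
  next
    case (Suc n)
    show ?case unfolding ZS
      by (intro sbm_add sbm_scale sbm_diff Suc Ym A_meas[OF coeff])
  qed
  have lim: "(\<lambda>n. indicator \<Omega> x *\<^sub>R Z n x) \<longlonglongrightarrow> indicator \<Omega> x *\<^sub>R inv (A x) (y x)" for x
  proof (cases "x \<in> \<Omega>")
    case True
    have "(\<lambda>n. Z n x) \<longlonglongrightarrow> inv (A x) (y x)"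
    proof (rule richardson[where B="A x" and c=c and M=M])
      show "linear (A x)" by (rule lin[OF True])
      show "A x \<xi> \<bullet> \<eta> = \<xi> \<bullet> A x \<eta>" for \<xi> \<eta> by (rule sym[OF True])
      show "c * (norm \<xi>)\<^sup>2 \<le> A x \<xi> \<bullet> \<xi>" for \<xi> by (rule coer[OF True])
      show "norm (A x \<xi>) \<le> M * norm \<xi>" for \<xi> by (rule bnd[OF True])
      show "Z 0 x = 0" by (simp add: Z0)
      show "Z (Suc n) x = Z n x + (1/M) *\<^sub>R (y x - A x (Z n x))" for n by (simp add: ZS Y_def True)
    qed (use c M in auto)
    thus ?thesis using True by simp
  qed simp
  have "(\<lambda>x. indicator \<Omega> x *\<^sub>R inv (A x) (y x)) \<in> borel_measurable lborel"
    by (rule borel_measurable_LIMSEQ_metric[OF _ lim]) (use Zm in \<open>simp add: set_borel_measurable_def\<close>)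
  thus ?thesis by (simp add: set_borel_measurable_def)
qed

lemma sq_A:
  fixes A :: "'a::euclidean_space \<Rightarrow> 'a \<Rightarrow> 'a"
  assumes coeff: "coeff_ok \<Omega> A" and g: "sq \<Omega> g"
  shows "sq \<Omega> (\<lambda>x. A x (g x))"
proof -
  obtain M c where M: "0 < M" and c: "0 < c" and lin: "\<And>x. x\<in>\<Omega> \<Longrightarrow> linear (A x)"
    and sym: "\<And>x \<xi> \<eta>. x\<in>\<Omega> \<Longrightarrow> A x \<xi> \<bullet> \<eta> = \<xi> \<bullet> A x \<eta>"
    and bnd: "\<And>x \<xi>. x\<in>\<Omega> \<Longrightarrow> norm (A x \<xi>) \<le> M * norm \<xi>"
    and coer: "\<And>x \<xi>. x\<in>\<Omega> \<Longrightarrow> c * (norm \<xi>)\<^sup>2 \<le> A x \<xi> \<bullet> \<xi>"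
    using coeff_props[OF coeff] by blast
  show ?thesis
  proof (rule sq_dom[OF g A_meas[OF coeff], where K=M])
    show "set_borel_measurable lborel \<Omega> g" using g by (simp add: sq_def)
    show "norm (A x (g x)) \<le> M * norm (g x)" if "x \<in> \<Omega>" for x by (rule bnd[OF that])
  qed
qed

lemma sq_invA:
  fixes A :: "'a::euclidean_space \<Rightarrow> 'a \<Rightarrow> 'a"
  assumes coeff: "coeff_ok \<Omega> A" and g: "sq \<Omega> g"
  shows "sq \<Omega> (\<lambda>x. inv (A x) (g x))"
proof -
  obtain M c where M: "0 < M" and c: "0 < c" and lin: "\<And>x. x\<in>\<Omega> \<Longrightarrow> linear (A x)"
    and sym: "\<And>x \<xi> \<eta>. x\<in>\<Omega> \<Longrightarrow> A x \<xi> \<bullet> \<eta> = \<xi> \<bullet> A x \<eta>"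
    and bnd: "\<And>x \<xi>. x\<in>\<Omega> \<Longrightarrow> norm (A x \<xi>) \<le> M * norm \<xi>"
    and coer: "\<And>x \<xi>. x\<in>\<Omega> \<Longrightarrow> c * (norm \<xi>)\<^sup>2 \<le> A x \<xi> \<bullet> \<xi>"
    using coeff_props[OF coeff] by blast
  show ?thesis
  proof (rule sq_dom[OF g inv_meas[OF coeff], where K="1/c"])
    show "set_borel_measurable lborel \<Omega> g" using g by (simp add: sq_def)
    fix x assume x: "x \<in> \<Omega>"
    have "norm (inv (A x) (g x)) \<le> norm (g x) / c" by (rule coer_inv(2)[OF lin[OF x] c coer[OF x]])
    thus "norm (inv (A x) (g x)) \<le> 1 / c * norm (g x)" by simp
  qed
qed


lemma int_cs:
  fixes B :: "'x::euclidean_space \<Rightarrow> 'b::euclidean_space \<Rightarrow> 'b"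
  assumes lin: "\<And>x. x\<in>S \<Longrightarrow> linear (B x)"
    and sym: "\<And>x u v. x\<in>S \<Longrightarrow> B x u \<bullet> v = u \<bullet> B x v"
    and psd: "\<And>x u. x\<in>S \<Longrightarrow> 0 \<le> B x u \<bullet> u"
    and i1: "set_integrable lborel S (\<lambda>x. B x (f x) \<bullet> f x)"
    and i2: "set_integrable lborel S (\<lambda>x. B x (f x) \<bullet> g x)"
    and i3: "set_integrable lborel S (\<lambda>x. B x (g x) \<bullet> g x)"
  shows "(LINT x:S|lborel. B x (f x) \<bullet> g x) \<le>
     sqrt (LINT x:S|lborel. B x (f x) \<bullet> f x) * sqrt (LINT x:S|lborel. B x (g x) \<bullet> g x)"
proof (rule quad_cs)
  show "0 \<le> (LINT x:S|lborel. B x (g x) \<bullet> g x)" by (rule sint_nonneg) (rule psd)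
next
  fix t :: real
  have pw: "B x (f x - t *\<^sub>R g x) \<bullet> (f x - t *\<^sub>R g x) =
     B x (f x) \<bullet> f x - 2*t*(B x (f x) \<bullet> g x) + t\<^sup>2 * (B x (g x) \<bullet> g x)" if x: "x \<in> S" for x
    using sym[OF x, of "f x" "g x"] lin[OF x]
    by (simp add: linear_diff linear_scale inner_diff_left inner_diff_right power2_eq_square algebra_simps inner_commute)
  have "0 \<le> (LINT x:S|lborel. B x (f x - t *\<^sub>R g x) \<bullet> (f x - t *\<^sub>R g x))"
    by (rule sint_nonneg) (rule psd)
  also have "\<dots> = (LINT x:S|lborel. B x (f x) \<bullet> f x - (2*t)*(B x (f x) \<bullet> g x) + t\<^sup>2 * (B x (g x) \<bullet> g x))"
    by (rule sint_cong) (simp add: pw)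
  also have "\<dots> = (LINT x:S|lborel. B x (f x) \<bullet> f x) - (2*t)*(LINT x:S|lborel. B x (f x) \<bullet> g x)
       + t\<^sup>2 * (LINT x:S|lborel. B x (g x) \<bullet> g x)"
    using i1 i2 i3 by (simp add: set_integral_add set_integral_diff set_integrable_mult_right)
  finally show "0 \<le> (LINT x:S|lborel. B x (f x) \<bullet> f x) - 2*t*(LINT x:S|lborel. B x (f x) \<bullet> g x)
       + t\<^sup>2 * (LINT x:S|lborel. B x (g x) \<bullet> g x)" by simp
qed

lemma l2_cs:
  fixes f g :: "'x::euclidean_space \<Rightarrow> real"
  assumes "sq S f" "sq S g"
  shows "(LINT x:S|lborel. f x * g x) \<le> sqrt (LINT x:S|lborel. (f x)\<^sup>2) * sqrt (LINT x:S|lborel. (g x)\<^sup>2)"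
proof -
  have "(LINT x:S|lborel. (\<lambda>z. z) (f x) \<bullet> g x) \<le>
     sqrt (LINT x:S|lborel. (\<lambda>z. z) (f x) \<bullet> f x) * sqrt (LINT x:S|lborel. (\<lambda>z. z) (g x) \<bullet> g x)"
    by (rule int_cs[where B="\<lambda>x z. z"])
       (use sq_mult[OF assms(1) assms(1)] sq_mult[OF assms(1) assms(2)] sq_mult[OF assms(2) assms(2)] in
        \<open>auto simp: linear_id[unfolded id_def]\<close>)
  thus ?thesis by (simp add: power2_eq_square)
qed

theorem theorem5p2:
  fixes \<Omega> :: "'a::euclidean_space set" and A :: "'a \<Rightarrow> 'a \<Rightarrow> 'a"
    and CP lam :: real and u w :: "'a \<Rightarrow> real" and gu gw :: "'a \<Rightarrow> 'a"
  assumes dom: "lipschitz_domain \<Omega>"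
    and coeff: "coeff_ok \<Omega> A"
    and CP_bound: "\<forall>v gv. inV \<Omega> v gv \<longrightarrow> L2norm \<Omega> v \<le> CP * Anorm \<Omega> A gv"
    and CP_min: "\<forall>C. (\<forall>v gv. inV \<Omega> v gv \<longrightarrow> L2norm \<Omega> v \<le> C * Anorm \<Omega> A gv) \<longrightarrow> CP \<le> C"
    and u: "inV \<Omega> u gu"
    and w: "inV \<Omega> w gw"
    and eq: "\<forall>v gv. inV \<Omega> v gv \<longrightarrow>
               aform \<Omega> A gw gv = aform \<Omega> A gu gv - lam * L2inner \<Omega> u v"
  shows "\<forall>q r. W0 \<Omega> q r \<longrightarrow>
           Anorm \<Omega> A gw \<le> Anorm \<Omega> A (\<lambda>x. gu x - inv (A x) (q x))
                           + CP * L2norm \<Omega> (\<lambda>x. lam * u x + r x)"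
proof (intro allI impI)
  fix q r assume W: "W0 \<Omega> q r"
  obtain M c where M: "0 < M" and c: "0 < c" and lin: "\<And>x. x\<in>\<Omega> \<Longrightarrow> linear (A x)"
    and sym: "\<And>x \<xi> \<eta>. x\<in>\<Omega> \<Longrightarrow> A x \<xi> \<bullet> \<eta> = \<xi> \<bullet> A x \<eta>"
    and bnd: "\<And>x \<xi>. x\<in>\<Omega> \<Longrightarrow> norm (A x \<xi>) \<le> M * norm \<xi>"
    and coer: "\<And>x \<xi>. x\<in>\<Omega> \<Longrightarrow> c * (norm \<xi>)\<^sup>2 \<le> A x \<xi> \<bullet> \<xi>"
    using coeff_props[OF coeff] by blast
  have psd: "0 \<le> A x \<xi> \<bullet> \<xi>" if "x \<in> \<Omega>" for x \<xi>
    using coer[OF that, of \<xi>] c by (meson mult_nonneg_nonneg order_trans less_imp_le zero_le_power2)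
  have aform_nn: "0 \<le> aform \<Omega> A g g" for g unfolding aform_def by (rule sint_nonneg) (rule psd)
  have Anorm_nn: "0 \<le> Anorm \<Omega> A g" for g unfolding Anorm_def using aform_nn by simp
  have L2norm_nn: "0 \<le> L2norm \<Omega> f" for f unfolding L2norm_def by (simp add: sint_nonneg)
  have sqL2: "sq \<Omega> f" if "L2 \<Omega> f" for f using that by (simp add: sq_def L2_def)
  have sqL2v: "sq \<Omega> f" if "L2v \<Omega> f" for f using that by (simp add: sq_def L2v_def)
  have Hq: "Hdiv \<Omega> q r" and green: "\<And>v g. H1 \<Omega> v g \<Longrightarrow>
      (LINT x:\<Omega>|lborel. q x \<bullet> g x) + (LINT x:\<Omega>|lborel. r x * v x) = 0"
    using W by (auto simp: W0_def)
  have sq_q: "sq \<Omega> q" and sq_r: "sq \<Omega> r" using Hq by (auto simp: Hdiv_def intro: sqL2 sqL2v)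
  have H1w: "H1 \<Omega> w gw" using w by (simp add: inV_def)
  have sq_u: "sq \<Omega> u" and sq_gu: "sq \<Omega> gu" using u by (auto simp: inV_def H1_def intro: sqL2 sqL2v)
  have sq_w: "sq \<Omega> w" and sq_gw: "sq \<Omega> gw" using w by (auto simp: inV_def H1_def intro: sqL2 sqL2v)
  define p where "p = (\<lambda>x. gu x - inv (A x) (q x))"
  define h where "h = (\<lambda>x. lam * u x + r x)"
  have sq_p: "sq \<Omega> p" unfolding p_def by (rule sq_diff[OF sq_gu sq_invA[OF coeff sq_q]])
  have sq_h: "sq \<Omega> h" unfolding h_def using sq_add[OF sq_scale[OF sq_u, of lam] sq_r] by simp
  have sq_Ap: "sq \<Omega> (\<lambda>x. A x (p x))" by (rule sq_A[OF coeff sq_p])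
  have sq_Agu: "sq \<Omega> (\<lambda>x. A x (gu x))" by (rule sq_A[OF coeff sq_gu])
  have sq_Agw: "sq \<Omega> (\<lambda>x. A x (gw x))" by (rule sq_A[OF coeff sq_gw])
  define N where "N = Anorm \<Omega> A gw"
  define P where "P = Anorm \<Omega> A p"
  define R where "R = L2norm \<Omega> h"
  define I1 where "I1 = (LINT x:\<Omega>|lborel. A x (p x) \<bullet> gw x)"
  define I2 where "I2 = (LINT x:\<Omega>|lborel. h x * w x)"
  have g0: "(LINT x:\<Omega>|lborel. q x \<bullet> gw x) + (LINT x:\<Omega>|lborel. r x * w x) = 0" by (rule green[OF H1w])
  have e0: "aform \<Omega> A gw gw = aform \<Omega> A gu gw - lam * L2inner \<Omega> u w" using eq w by blast
  have Ap: "A x (p x) \<bullet> gw x = A x (gu x) \<bullet> gw x - q x \<bullet> gw x" if x: "x \<in> \<Omega>" for x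
    using coer_inv(1)[OF lin[OF x] c coer[OF x], of "q x"]
    by (simp add: p_def linear_diff[OF lin[OF x]] inner_diff_left)
  have "I1 = (LINT x:\<Omega>|lborel. A x (gu x) \<bullet> gw x - q x \<bullet> gw x)"
    unfolding I1_def by (rule sint_cong) (rule Ap)
  also have "\<dots> = aform \<Omega> A gu gw - (LINT x:\<Omega>|lborel. q x \<bullet> gw x)"
    unfolding aform_def by (rule set_integral_diff(2)) (intro sq_inner sq_Agu sq_gw sq_q)+
  finally have I1e: "I1 = aform \<Omega> A gu gw - (LINT x:\<Omega>|lborel. q x \<bullet> gw x)" .
  have "I2 = (LINT x:\<Omega>|lborel. lam * (u x * w x) + r x * w x)"
    unfolding I2_def h_def by (rule sint_cong) (simp add: algebra_simps)
  also have "\<dots> = lam * L2inner \<Omega> u w + (LINT x:\<Omega>|lborel. r x * w x)"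
    unfolding L2inner_def using sq_mult[OF sq_u sq_w] sq_mult[OF sq_r sq_w]
    by (simp add: set_integral_add set_integrable_mult_right)
  finally have I2e: "I2 = lam * L2inner \<Omega> u w + (LINT x:\<Omega>|lborel. r x * w x)" .
  have N2: "N * N = I1 - I2"
  proof -
    have "N * N = aform \<Omega> A gw gw" unfolding N_def Anorm_def using aform_nn by simp
    thus ?thesis using e0 I1e I2e g0 by linarith
  qed
  have CS1: "I1 \<le> P * N"
  proof -
    have "I1 \<le> sqrt (LINT x:\<Omega>|lborel. A x (p x) \<bullet> p x) * sqrt (LINT x:\<Omega>|lborel. A x (gw x) \<bullet> gw x)"
      unfolding I1_def
      by (rule int_cs[where B=A]) (auto intro: lin sym psd sq_inner sq_Ap sq_p sq_gw sq_Agw)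
    thus ?thesis by (simp add: P_def N_def Anorm_def aform_def)
  qed
  have CS2: "- I2 \<le> R * L2norm \<Omega> w"
  proof -
    have sq_mh: "sq \<Omega> (\<lambda>x. - h x)" using sq_scale[OF sq_h, of "-1"] by simp
    have "(LINT x:\<Omega>|lborel. (- h x) * w x) \<le> sqrt (LINT x:\<Omega>|lborel. (- h x)\<^sup>2) * sqrt (LINT x:\<Omega>|lborel. (w x)\<^sup>2)"
      by (rule l2_cs[OF sq_mh sq_w])
    moreover have "(LINT x:\<Omega>|lborel. (- h x) * w x) = - I2"
      unfolding I2_def using set_integral_uminus[OF sq_mult[OF sq_h sq_w]] by simp
    ultimately show ?thesis by (simp add: R_def L2norm_def)
  qed
  have Cw: "L2norm \<Omega> w \<le> CP * N" using CP_bound w unfolding N_def by blast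
  have CP0: "0 \<le> CP"
  proof (rule ccontr)
    assume neg: "\<not> 0 \<le> CP"
    have "\<forall>v gv. inV \<Omega> v gv \<longrightarrow> L2norm \<Omega> v \<le> (CP - 1) * Anorm \<Omega> A gv"
    proof (intro allI impI)
      fix v gv assume "inV \<Omega> v gv"
      hence b: "L2norm \<Omega> v \<le> CP * Anorm \<Omega> A gv" using CP_bound by blast
      have a0: "0 \<le> Anorm \<Omega> A gv" and l0: "0 \<le> L2norm \<Omega> v" by (rule Anorm_nn, rule L2norm_nn)
      have "CP * Anorm \<Omega> A gv \<le> 0" using neg a0 by (simp add: mult_nonpos_nonneg)
      hence p: "CP * Anorm \<Omega> A gv = 0" using b l0 by linarith
      hence "Anorm \<Omega> A gv = 0" using neg by simp
      moreover have "L2norm \<Omega> v = 0" using b l0 p by linarith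
      ultimately show "L2norm \<Omega> v \<le> (CP - 1) * Anorm \<Omega> A gv" by simp
    qed
    hence "CP \<le> CP - 1" using CP_min by blast
    thus False by simp
  qed
  have N0: "0 \<le> N" and P0: "0 \<le> P" and R0: "0 \<le> R"
    unfolding N_def P_def R_def by (rule Anorm_nn Anorm_nn L2norm_nn)+
  have "R * L2norm \<Omega> w \<le> R * (CP * N)" by (rule mult_left_mono[OF Cw R0])
  hence "N * N \<le> N * (P + CP * R)" using N2 CS1 CS2 by (simp add: algebra_simps)
  hence "N \<le> P + CP * R"
    using N0 P0 R0 CP0 by (cases "N = 0") (auto simp: mult_le_cancel_left)
  thus "Anorm \<Omega> A gw \<le> Anorm \<Omega> A (\<lambda>x. gu x - inv (A x) (q x)) + CP * L2norm \<Omega> (\<lambda>x. lam * u x + r x)"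
    unfolding N_def P_def R_def p_def h_def .
qed

end
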